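(* Let $U\subseteq\mathbb{R}^4$ be open with coordinates $(x^1,x^2,x^3,x^4)$ and let $a,b,p,q,s$ be real constants with $a^2+b^2\neq0$. Consider the Lorentzian metric $$g=2\,dx^1dx^4+(dx^2)^2+(dx^3)^2+\Big(x^4\big(a(x^2)^2+b(x^3)^2\big)+p(x^2)^2+2qx^2x^3+s(x^3)^2\Big)(dx^4)^2$$ on $U$. Then $(U,g)$ belongs to class $\mathcal{A}$ (its Ricci tensor is a Killing tensor) if and only if $b=-a$.
   Context: A pseudo-Riemannian manifold belongs to Gray's class $\mathcal{A}$ if its Ricci tensor $\varrho$ is cyclic-parallel, $(\nabla_X\varrho)(Y,Z)+(\nabla_Y\varrho)(Z,X)+(\nabla_Z\varrho)(X,Y)=0$ for all vector fields $X,Y,Z$, equivalently $(\nabla_X\varrho)(X,X)=0$ for all $X$; $\nabla$ is the Levi-Civita connection. *)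

theory Defs
  imports "HOL-Analysis.Analysis" "HOL-Library.Numeral_Type"
begin

text \<open>Pseudo-Riemannian metrics on an open subset of R^4, given in the global
coordinates (x^1,...,x^4) = (x$1,...,x$4) by their component functions
g_ij(x). Indices range over the 4-element type 4 (elements 1,2,3,4).\<close>

type_synonym metric4 = "real^4 \<Rightarrow> 4 \<Rightarrow> 4 \<Rightarrow> real"

definition pd :: "4 \<Rightarrow> (real^4 \<Rightarrow> real) \<Rightarrow> real^4 \<Rightarrow> real" where
  "pd i f x = deriv (\<lambda>t. f (x + t *\<^sub>R axis i 1)) 0"

definition ginv :: "metric4 \<Rightarrow> real^4 \<Rightarrow> 4 \<Rightarrow> 4 \<Rightarrow> real" where
  "ginv g x i j = matrix_inv (\<chi> k l. g x k l) $ i $ j"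

definition christoffel :: "metric4 \<Rightarrow> real^4 \<Rightarrow> 4 \<Rightarrow> 4 \<Rightarrow> 4 \<Rightarrow> real" where
  "christoffel g x k i j = (1/2) * (\<Sum>l\<in>UNIV. ginv g x k l *
      (pd i (\<lambda>y. g y j l) x + pd j (\<lambda>y. g y i l) x - pd l (\<lambda>y. g y i j) x))"

definition ricci :: "metric4 \<Rightarrow> real^4 \<Rightarrow> 4 \<Rightarrow> 4 \<Rightarrow> real" where
  "ricci g x j k = (\<Sum>i\<in>UNIV.
      pd i (\<lambda>y. christoffel g y i j k) x - pd j (\<lambda>y. christoffel g y i i k) x
      + (\<Sum>p\<in>UNIV. christoffel g x i i p * christoffel g x p j k
                   - christoffel g x i j p * christoffel g x p i k))"

definition nabla_ricci :: "metric4 \<Rightarrow> real^4 \<Rightarrow> 4 \<Rightarrow> 4 \<Rightarrow> 4 \<Rightarrow> real" where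
  "nabla_ricci g x i j k = pd i (\<lambda>y. ricci g y j k) x
      - (\<Sum>p\<in>UNIV. christoffel g x p i j * ricci g x p k)
      - (\<Sum>p\<in>UNIV. christoffel g x p i k * ricci g x j p)"

text \<open>Gray's class A: the Ricci tensor is cyclic-parallel at every point of U
(tensorial identity, checked on the coordinate frame).\<close>
definition class_A :: "metric4 \<Rightarrow> (real^4) set \<Rightarrow> bool" where
  "class_A g U \<longleftrightarrow> (\<forall>x\<in>U. \<forall>i j k.
      nabla_ricci g x i j k + nabla_ricci g x j k i + nabla_ricci g x k i j = 0)"

definition walker_H :: "real \<Rightarrow> real \<Rightarrow> real \<Rightarrow> real \<Rightarrow> real \<Rightarrow> real^4 \<Rightarrow> real" where
  "walker_H a b p q s x = x$4 * (a * (x$2)^2 + b * (x$3)^2)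
      + p * (x$2)^2 + 2 * q * x$2 * x$3 + s * (x$3)^2"

definition walker_metric :: "real \<Rightarrow> real \<Rightarrow> real \<Rightarrow> real \<Rightarrow> real \<Rightarrow> metric4" where
  "walker_metric a b p q s x i j =
     (if (i = 1 \<and> j = 4) \<or> (i = 4 \<and> j = 1) then 1
      else if i = j \<and> (i = 2 \<or> i = 3) then 1
      else if i = 4 \<and> j = 4 then walker_H a b p q s x
      else 0)"

end

theory Submission imports Defs begin

definition sm :: "(real^4 \<Rightarrow> real) \<Rightarrow> bool" where
  "sm f \<longleftrightarrow> (\<forall>x i. (\<lambda>t. f (x + t *\<^sub>R axis i 1)) differentiable (at 0))"

lemma pd_eq: "((\<lambda>t. f (x + t *\<^sub>R axis i 1)) has_real_derivative D) (at 0) \<Longrightarrow> pd i f x = D"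
  by (simp add: pd_def DERIV_imp_deriv)

lemma smD: "sm f \<Longrightarrow> ((\<lambda>t. f (x + t *\<^sub>R axis i 1)) has_real_derivative pd i f x) (at 0)"
  unfolding sm_def pd_def using DERIV_deriv_iff_real_differentiable by blast

lemma smI: "(\<And>x i. ((\<lambda>t. f (x + t *\<^sub>R axis i 1)) has_real_derivative D x i) (at 0)) \<Longrightarrow> sm f"
  unfolding sm_def using real_differentiable_def by blast

lemma sm_const[simp]: "sm (\<lambda>y. c)"
  by (rule smI[where D="\<lambda>_ _. 0"]) (rule derivative_eq_intros, simp)

lemma pd_const[simp]: "pd i (\<lambda>y. c) x = 0"
  by (rule pd_eq) (rule derivative_eq_intros, simp)

lemma line_nth: "(x + t *\<^sub>R axis i 1) $ j = x $ j + t * (if j = i then 1 else 0)"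
  by (cases "j = i") (auto simp: axis_def)

lemma sm_nth[simp]: "sm (\<lambda>y. y $ j)"
  by (rule smI[where D="\<lambda>_ i. if j = i then 1 else 0"], subst line_nth) (auto intro!: derivative_eq_intros)

lemma pd_nth[simp]: "pd i (\<lambda>y. y $ j) x = (if j = i then 1 else 0)"
  by (rule pd_eq, subst line_nth) (auto intro!: derivative_eq_intros)

lemma sm_add[simp]: "sm f \<Longrightarrow> sm g \<Longrightarrow> sm (\<lambda>y. f y + g y)"
  by (rule smI) (rule DERIV_add; erule smD)
lemma pd_add[simp]: "sm f \<Longrightarrow> sm g \<Longrightarrow> pd i (\<lambda>y. f y + g y) x = pd i f x + pd i g x"
  by (rule pd_eq) (rule DERIV_add; erule smD)
lemma sm_diff[simp]: "sm f \<Longrightarrow> sm g \<Longrightarrow> sm (\<lambda>y. f y - g y)"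
  by (rule smI) (rule DERIV_diff; erule smD)
lemma pd_diff[simp]: "sm f \<Longrightarrow> sm g \<Longrightarrow> pd i (\<lambda>y. f y - g y) x = pd i f x - pd i g x"
  by (rule pd_eq) (rule DERIV_diff; erule smD)
lemma sm_mult[simp]: "sm f \<Longrightarrow> sm g \<Longrightarrow> sm (\<lambda>y. f y * g y)"
  by (rule smI) (rule DERIV_mult; erule smD)
lemma pd_mult[simp]: "sm f \<Longrightarrow> sm g \<Longrightarrow> pd i (\<lambda>y. f y * g y) x = pd i f x * g x + f x * pd i g x"
  by (rule pd_eq) (rule derivative_eq_intros, (erule smD)+, simp)
lemma sm_minus[simp]: "sm f \<Longrightarrow> sm (\<lambda>y. - f y)"
  by (rule smI) (rule DERIV_minus; erule smD)
lemma pd_minus[simp]: "sm f \<Longrightarrow> pd i (\<lambda>y. - f y) x = - pd i f x"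
  by (rule pd_eq) (rule DERIV_minus; erule smD)
lemma sm_power[simp]: "sm f \<Longrightarrow> sm (\<lambda>y. f y ^ n)"
  by (rule smI) (rule derivative_eq_intros, erule smD, simp)
lemma pd_power[simp]: "sm f \<Longrightarrow> pd i (\<lambda>y. f y ^ n) x = real n * f x ^ (n - 1) * pd i f x"
  by (rule pd_eq) (rule derivative_eq_intros, erule smD, simp)
lemma sm_divide[simp]: "sm f \<Longrightarrow> sm (\<lambda>y. f y / c)"
  by (rule smI) (rule DERIV_cdivide; erule smD)
lemma pd_divide[simp]: "sm f \<Longrightarrow> pd i (\<lambda>y. f y / c) x = pd i f x / c"
  by (rule pd_eq) (rule DERIV_cdivide; erule smD)


lemma matrix_inv_eq:
  fixes A B :: "real^4^4"
  assumes "A ** B = mat 1" "B ** A = mat 1"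
  shows "matrix_inv A = B"
proof -
  let ?C = "matrix_inv A"
  have "A ** ?C = mat 1 \<and> ?C ** A = mat 1"
    unfolding matrix_inv_def by (rule someI[of _ B]) (use assms in auto)
  then have "?C = ?C ** (A ** B)" using assms by (simp add: matrix_mul_rid)
  also have "\<dots> = (?C ** A) ** B" by (simp add: matrix_mul_assoc)
  also have "\<dots> = B" using \<open>A ** ?C = mat 1 \<and> ?C ** A = mat 1\<close> by (simp add: matrix_mul_lid)
  finally show ?thesis .
qed

definition Gi :: "real \<Rightarrow> real \<Rightarrow> real \<Rightarrow> real \<Rightarrow> real \<Rightarrow> real^4 \<Rightarrow> 4 \<Rightarrow> 4 \<Rightarrow> real" where
  "Gi a b p q s x k l = (if k = 1 \<and> l = 1 then - walker_H a b p q s x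
     else if (k = 1 \<and> l = 4) \<or> (k = 4 \<and> l = 1) then 1
     else if k = l \<and> (k = 2 \<or> k = 3) then 1 else 0)"

lemma ginv_eq: "ginv (walker_metric a b p q s) x k l = Gi a b p q s x k l"
proof -
  have 1: "((\<chi> k l. walker_metric a b p q s x k l) ** (\<chi> k l. Gi a b p q s x k l)) $ i $ j = mat 1 $ i $ j" for i j
    using exhaust_4[of i] exhaust_4[of j]
    by (elim disjE) (simp_all add: matrix_matrix_mult_def sum_4 walker_metric_def Gi_def mat_def)
  have 2: "((\<chi> k l. Gi a b p q s x k l) ** (\<chi> k l. walker_metric a b p q s x k l)) $ i $ j = mat 1 $ i $ j" for i j
    using exhaust_4[of i] exhaust_4[of j]
    by (elim disjE) (simp_all add: matrix_matrix_mult_def sum_4 walker_metric_def Gi_def mat_def)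
  have "matrix_inv (\<chi> k l. walker_metric a b p q s x k l) = (\<chi> k l. Gi a b p q s x k l)"
    by (rule matrix_inv_eq) (simp_all add: vec_eq_iff 1 2)
  then show ?thesis unfolding ginv_def by simp
qed

definition Hd :: "real \<Rightarrow> real \<Rightarrow> real \<Rightarrow> real \<Rightarrow> real \<Rightarrow> real^4 \<Rightarrow> 4 \<Rightarrow> real" where
  "Hd a b p q s x i = (if i = 2 then 2*a*x$4*x$2 + 2*p*x$2 + 2*q*x$3
     else if i = 3 then 2*b*x$4*x$3 + 2*q*x$2 + 2 * s * x$3
     else if i = 4 then a*x$2^2 + b*x$3^2 else 0)"

lemma pd_H: "pd i (walker_H a b p q s) x = Hd a b p q s x i"
proof -
  have e: "walker_H a b p q s = (\<lambda>y. y$4 * (a * (y$2)^2 + b * (y$3)^2)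
      + p * (y$2)^2 + 2 * q * y$2 * y$3 + s * (y$3)^2)"
    by (simp add: walker_H_def fun_eq_iff)
  show ?thesis unfolding e using exhaust_4[of i]
    by (elim disjE) (simp_all add: Hd_def algebra_simps)
qed

lemma Hd1[simp]: "Hd a b p q s x 1 = 0"
  by (simp add: Hd_def)

lemma pd_metric: "pd i (\<lambda>y. walker_metric a b p q s y j l) x =
    (if j = 4 \<and> l = 4 then Hd a b p q s x i else 0)"
  using exhaust_4[of j] exhaust_4[of l]
  by (elim disjE) (simp_all add: walker_metric_def pd_H)

definition Chr :: "real \<Rightarrow> real \<Rightarrow> real \<Rightarrow> real \<Rightarrow> real \<Rightarrow> real^4 \<Rightarrow> 4 \<Rightarrow> 4 \<Rightarrow> 4 \<Rightarrow> real" where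
  "Chr a b p q s x k i j = (if k = 1 then
       (if i = 4 \<and> j = 4 then Hd a b p q s x 4 / 2 else if i = 4 then Hd a b p q s x j / 2
        else if j = 4 then Hd a b p q s x i / 2 else 0)
     else if (k = 2 \<or> k = 3) \<and> i = 4 \<and> j = 4 then - Hd a b p q s x k / 2 else 0)"

lemma chr_eq: "christoffel (walker_metric a b p q s) x k i j = Chr a b p q s x k i j"
  unfolding christoffel_def ginv_eq pd_metric
  using exhaust_4[of k] exhaust_4[of i] exhaust_4[of j]
  by (elim disjE) (simp_all add: sum_4 Gi_def Chr_def)


definition HH :: "real \<Rightarrow> real \<Rightarrow> real \<Rightarrow> real \<Rightarrow> real \<Rightarrow> real^4 \<Rightarrow> 4 \<Rightarrow> 4 \<Rightarrow> real" where
  "HH a b p q s x i m = (if m = 2 then (if i = 2 then 2*a*x$4 + 2*p else if i = 3 then 2*q else if i = 4 then 2*a*x$2 else 0)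
     else if m = 3 then (if i = 2 then 2*q else if i = 3 then 2*b*x$4 + 2 * s else if i = 4 then 2*b*x$3 else 0)
     else if m = 4 then (if i = 2 then 2*a*x$2 else if i = 3 then 2*b*x$3 else 0) else 0)"

lemma sm_Hd[simp]: "sm (\<lambda>y. Hd a b p q s y m)"
  unfolding Hd_def by (cases "m = 2"; cases "m = 3"; cases "m = 4") simp_all

lemma pd_Hd[simp]: "pd i (\<lambda>y. Hd a b p q s y m) x = HH a b p q s x i m"
  unfolding Hd_def using exhaust_4[of i] exhaust_4[of m]
  by (elim disjE) (simp_all add: HH_def)

definition cc :: "4 \<Rightarrow> 4 \<Rightarrow> 4 \<Rightarrow> real" where
  "cc k i j = (if k = 1 then (if i = 4 \<or> j = 4 then 1/2 else 0)
     else if (k = 2 \<or> k = 3) \<and> i = 4 \<and> j = 4 then -1/2 else 0)"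

definition mm :: "4 \<Rightarrow> 4 \<Rightarrow> 4 \<Rightarrow> 4" where
  "mm k i j = (if k = 1 then (if i = 4 then j else i) else k)"

lemma Chr_alt: "Chr a b p q s x k i j = cc k i j * Hd a b p q s x (mm k i j)"
  using exhaust_4[of k] exhaust_4[of i] exhaust_4[of j]
  by (elim disjE) (simp_all add: Chr_def cc_def mm_def)

definition dChr :: "real \<Rightarrow> real \<Rightarrow> real \<Rightarrow> real \<Rightarrow> real \<Rightarrow> real^4 \<Rightarrow> 4 \<Rightarrow> 4 \<Rightarrow> 4 \<Rightarrow> 4 \<Rightarrow> real" where
  "dChr a b p q s x n k i j = cc k i j * HH a b p q s x n (mm k i j)"

lemma pd_Chr: "pd n (\<lambda>y. Chr a b p q s y k i j) x = dChr a b p q s x n k i j"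
  unfolding Chr_alt dChr_def by simp

definition Ric :: "real \<Rightarrow> real \<Rightarrow> real \<Rightarrow> real \<Rightarrow> real \<Rightarrow> real^4 \<Rightarrow> 4 \<Rightarrow> 4 \<Rightarrow> real" where
  "Ric a b p q s x j k = (if j = 4 \<and> k = 4 then - ((a + b) * x$4 + p + s) else 0)"

lemma chr_tr: "Chr a b p q s x i i k = 0"
  using exhaust_4[of i] exhaust_4[of k]
  by (elim disjE) (simp_all add: Chr_def)

lemma quad0: "Chr a b p q s x i j r * Chr a b p q s x r i k = 0"
  using exhaust_4[of i] exhaust_4[of j] exhaust_4[of r] exhaust_4[of k]
  by (elim disjE) (simp_all add: Chr_def)

lemma ric_eq: "ricci (walker_metric a b p q s) x j k = Ric a b p q s x j k"
proof -
  have "ricci (walker_metric a b p q s) x j k = (\<Sum>i\<in>UNIV. dChr a b p q s x i i j k)"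
    unfolding ricci_def chr_eq pd_Chr chr_tr quad0 by simp
  also have "\<dots> = Ric a b p q s x j k"
    unfolding sum_4 dChr_def
    using exhaust_4[of j] exhaust_4[of k]
    by (elim disjE) (simp_all add: cc_def mm_def Ric_def HH_def field_simps)
  finally show ?thesis .
qed

lemma pd_Ric: "pd i (\<lambda>y. Ric a b p q s y j k) x = (if j = 4 \<and> k = 4 \<and> i = 4 then - (a + b) else 0)"
  unfolding Ric_def by (cases "j = 4 \<and> k = 4") auto

lemma sum_CR: "(\<Sum>r\<in>UNIV. Chr a b p q s x r i j * Ric a b p q s x r k) = 0"
  by (simp add: sum_4 Ric_def Chr_def)

lemma sum_CR2: "(\<Sum>r\<in>UNIV. Chr a b p q s x r i k * Ric a b p q s x j r) = 0"
  by (simp add: sum_4 Ric_def Chr_def)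

lemma nabla_eq: "nabla_ricci (walker_metric a b p q s) x i j k =
   (if i = 4 \<and> j = 4 \<and> k = 4 then - (a + b) else 0)"
  unfolding nabla_ricci_def ric_eq chr_eq pd_Ric
  by (simp add: sum_CR sum_CR2)

theorem mainTheorem3:
  fixes U :: "(real^4) set" and a b p q s :: real
  assumes "open U" and "U \<noteq> {}" and "a^2 + b^2 \<noteq> 0"
  shows "class_A (walker_metric a b p q s) U \<longleftrightarrow> b = -a"
proof
  assume h: "class_A (walker_metric a b p q s) U"
  obtain x where "x \<in> U" using assms(2) by blast
  with h have "nabla_ricci (walker_metric a b p q s) x 4 4 4 + nabla_ricci (walker_metric a b p q s) x 4 4 4
      + nabla_ricci (walker_metric a b p q s) x 4 4 4 = 0"
    unfolding class_A_def by blast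
  then show "b = -a" unfolding nabla_eq by simp
next
  assume "b = -a"
  then show "class_A (walker_metric a b p q s) U"
    unfolding class_A_def nabla_eq by simp
qed

end
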